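(* Let $n\geq 2$. If $\prec_1,\ldots,\prec_n$ are linear orders on $D_n$ which realize the product order $<$, then there is a permutation $\sigma\in S_n$ such that for all $i\leq n$ and all $\mathbf{a},\mathbf{b}\in D_n$, $a_i<b_i$ if and only if $\mathbf{a}\prec_{\sigma(i)}\mathbf{b}$.
   Context: Fix $n\geq 2$ and a set $D_n\subseteq\mathbb{Q}^n$ which is dense in $\mathbb{Q}^n$ (product topology) and such that no two distinct points of $D_n$ share a common coordinate. The product order: $\mathbf{a}<\mathbf{b}$ iff $a_i\leq b_i$ for all $i$ and $\mathbf{a}\neq\mathbf{b}$. Linear orders realize $<$ if their intersection is $<$. $S_n$ is the permutation group of $\{1,\ldots,n\}$. *)

theory Defs
  imports Complex_Main
begin

text \<open>Points of Q^n are functions from a finite index type 'n (with CARD('n) = n) to rat.\<close>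

definition prod_less :: "('n \<Rightarrow> rat) \<Rightarrow> ('n \<Rightarrow> rat) \<Rightarrow> bool" where
  "prod_less a b \<longleftrightarrow> (\<forall>i. a i \<le> b i) \<and> a \<noteq> b"

text \<open>Density in Q^n with the product topology (Q carrying its order topology):
  D meets every nonempty basic open box  prod_i (l_i, u_i).\<close>
definition dense_in_Qn :: "('n \<Rightarrow> rat) set \<Rightarrow> bool" where
  "dense_in_Qn D \<longleftrightarrow>
     (\<forall>l u. (\<forall>i. l i < u i) \<longrightarrow> (\<exists>d\<in>D. \<forall>i. l i < d i \<and> d i < u i))"

definition no_common_coord :: "('n \<Rightarrow> rat) set \<Rightarrow> bool" where
  "no_common_coord D \<longleftrightarrow> (\<forall>a\<in>D. \<forall>b\<in>D. a \<noteq> b \<longrightarrow> (\<forall>i. a i \<noteq> b i))"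

definition lin_order_on :: "'a set \<Rightarrow> 'a rel \<Rightarrow> bool" where
  "lin_order_on D r \<longleftrightarrow> r \<subseteq> D \<times> D \<and> strict_linear_order_on D r"

definition realizes :: "'a set \<Rightarrow> 'i set \<Rightarrow> ('i \<Rightarrow> 'a rel) \<Rightarrow> ('a \<Rightarrow> 'a \<Rightarrow> bool) \<Rightarrow> bool" where
  "realizes D I R P \<longleftrightarrow> (\<forall>a\<in>D. \<forall>b\<in>D. P a b \<longleftrightarrow> (\<forall>i\<in>I. (a, b) \<in> R i))"

end

theory Submission
  imports Defs
begin

definition std :: "('n \<Rightarrow> 'n \<Rightarrow> rat) \<Rightarrow> ('n \<Rightarrow> 'n \<Rightarrow> rat) \<Rightarrow> bool" where
  "std P Q \<longleftrightarrow> (\<forall>l. Q l l < P l l) \<and> (\<forall>l l'. l \<noteq> l' \<longrightarrow> (\<forall>m. P l m < Q l' m))"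

lemma bound_sum:
  fixes a b :: "'n::finite \<Rightarrow> rat"
  shows "\<bar>a m\<bar> + \<bar>b m\<bar> \<le> (\<Sum>i\<in>UNIV. \<bar>a i\<bar> + \<bar>b i\<bar>)"
  by (rule member_le_sum) auto

locale lem_ctx =
  fixes D :: "('n::finite \<Rightarrow> rat) set" and R :: "'n \<Rightarrow> ('n \<Rightarrow> rat) rel"
  assumes dense: "dense_in_Qn D" and ncc: "no_common_coord D"
    and lin: "\<And>j. lin_order_on D (R j)" and real: "realizes D UNIV R prod_less"
begin

lemma trans_R: "(x,y) \<in> R j \<Longrightarrow> (y,z) \<in> R j \<Longrightarrow> (x,z) \<in> R j"
  using lin[of j] unfolding lin_order_on_def strict_linear_order_on_def trans_def by blast

lemma irr: "(x,x) \<notin> R j"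
  using lin[of j] unfolding lin_order_on_def strict_linear_order_on_def irrefl_def by blast

lemma total: "x \<in> D \<Longrightarrow> y \<in> D \<Longrightarrow> x \<noteq> y \<Longrightarrow> (x,y) \<in> R j \<or> (y,x) \<in> R j"
  using lin[of j] unfolding lin_order_on_def strict_linear_order_on_def total_on_def by blast

lemma inD: "(x,y) \<in> R j \<Longrightarrow> x \<in> D \<and> y \<in> D"
  using lin[of j] unfolding lin_order_on_def by blast

lemma sl_R: "x \<in> D \<Longrightarrow> y \<in> D \<Longrightarrow> (\<forall>i. x i < y i) \<Longrightarrow> (x,y) \<in> R j"
proof -
  assume a: "x \<in> D" "y \<in> D" "\<forall>i. x i < y i"
  have "x \<noteq> y" using a(3) by (metis less_irrefl)
  then have "prod_less x y" using a(3) unfolding prod_less_def by (simp add: less_imp_le)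
  then show ?thesis using real a unfolding realizes_def by blast
qed

lemma rev_ex: "p \<in> D \<Longrightarrow> q \<in> D \<Longrightarrow> q k < p k \<Longrightarrow> \<exists>j. (q,p) \<in> R j"
proof -
  assume a: "p \<in> D" "q \<in> D" "q k < p k"
  have "\<not> prod_less p q" using a(3) unfolding prod_less_def by (meson not_le)
  then obtain j where "(p,q) \<notin> R j" using real a unfolding realizes_def by blast
  moreover have "p \<noteq> q" using a(3) by auto
  ultimately show ?thesis using total a by blast
qed

lemma pick: "(\<forall>i. l i < u i) \<Longrightarrow> \<exists>d\<in>D. \<forall>i. l i < d i \<and> d i < u i"
  using dense unfolding dense_in_Qn_def by blast

lemma at_most_one:
  assumes "std P Q" "\<forall>l. P l \<in> D \<and> Q l \<in> D"
    and "(Q l, P l) \<in> R j" "(Q l', P l') \<in> R j"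
  shows "l = l'"
proof (rule ccontr)
  assume ne: "l \<noteq> l'"
  have "(P l, Q l') \<in> R j" using assms ne by (intro sl_R) (auto simp: std_def)
  moreover have "(P l', Q l) \<in> R j" using assms ne by (intro sl_R) (auto simp: std_def)
  ultimately have "(Q l, Q l) \<in> R j" using assms(3,4) trans_R by meson
  then show False using irr by blast
qed

lemma std_unique:
  assumes st: "std P Q" and D: "\<forall>l. P l \<in> D \<and> Q l \<in> D"
    and r1: "(Q l, P l) \<in> R j" and r2: "(Q l, P l) \<in> R j'"
  shows "j = j'"
proof -
  define \<tau> where "\<tau> l = (SOME j. (Q l, P l) \<in> R j)" for l
  have t: "(Q l, P l) \<in> R (\<tau> l)" for l
    unfolding \<tau>_def by (rule someI_ex, rule rev_ex[of "P l" "Q l" l]) (use st D in \<open>auto simp: std_def\<close>)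
  have "inj \<tau>" unfolding inj_def using at_most_one[OF st D] t by metis
  then have "surj \<tau>" by (simp add: finite_UNIV_inj_surj)
  have key: "(Q l, P l) \<in> R i \<Longrightarrow> i = \<tau> l" for i
  proof -
    assume h: "(Q l, P l) \<in> R i"
    obtain l'' where "i = \<tau> l''" using \<open>surj \<tau>\<close> by (metis surjD)
    then have "(Q l'', P l'') \<in> R i" using t by simp
    then have "l'' = l" using at_most_one[OF st D] h by blast
    then show ?thesis using \<open>i = \<tau> l''\<close> by simp
  qed
  show ?thesis using key[OF r1] key[OF r2] by simp
qed

lemma extend:
  assumes pD: "p \<in> D" and qD: "q \<in> D" and gap: "q k < p k" and iv: "\<forall>m. m \<noteq> k \<longrightarrow> p m < q m"
  shows "\<exists>P Q. std P Q \<and> (\<forall>l. P l \<in> D \<and> Q l \<in> D) \<and> P k = p \<and> Q k = q"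
proof -
  define M where "M = 1 + (\<Sum>i\<in>UNIV. \<bar>p i\<bar> + \<bar>q i\<bar>)"
  have Mb: "\<bar>p m\<bar> < M \<and> \<bar>q m\<bar> < M" for m
    using bound_sum[of p m q] unfolding M_def by auto
  have "\<forall>l. \<exists>x. l \<noteq> k \<longrightarrow> x \<in> D \<and> (\<forall>m. (if m = l then (p l + q l)/2 else -M-1) < x m \<and> x m < (if m = l then q l else -M))"
  proof
    fix l show "\<exists>x. l \<noteq> k \<longrightarrow> x \<in> D \<and> (\<forall>m. (if m = l then (p l + q l)/2 else -M-1) < x m \<and> x m < (if m = l then q l else -M))"
    proof (cases "l = k")
      case False
      then have "p l < q l" using iv by auto
      then have "\<forall>m. (if m = l then (p l + q l)/2 else -M-1) < (if m = l then q l else -M)" by auto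
      from pick[OF this] show ?thesis by blast
    qed auto
  qed
  then obtain f where f: "\<forall>l. l \<noteq> k \<longrightarrow> f l \<in> D \<and> (\<forall>m. (if m = l then (p l + q l)/2 else -M-1) < f l m \<and> f l m < (if m = l then q l else -M))"
    by metis
  have "\<forall>l. \<exists>x. l \<noteq> k \<longrightarrow> x \<in> D \<and> (\<forall>m. (if m = l then p l else M) < x m \<and> x m < (if m = l then (p l + q l)/2 else M+1))"
  proof
    fix l show "\<exists>x. l \<noteq> k \<longrightarrow> x \<in> D \<and> (\<forall>m. (if m = l then p l else M) < x m \<and> x m < (if m = l then (p l + q l)/2 else M+1))"
    proof (cases "l = k")
      case False
      then have "p l < q l" using iv by auto
      then have "\<forall>m. (if m = l then p l else M) < (if m = l then (p l + q l)/2 else M+1)" by auto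
      from pick[OF this] show ?thesis by blast
    qed auto
  qed
  then obtain g where g: "\<forall>l. l \<noteq> k \<longrightarrow> g l \<in> D \<and> (\<forall>m. (if m = l then p l else M) < g l m \<and> g l m < (if m = l then (p l + q l)/2 else M+1))"
    by metis
  have fd: "(p l + q l)/2 < f l l \<and> f l l < q l" if "l \<noteq> k" for l
    using f that by (metis (full_types))
  have fo: "-M-1 < f l m \<and> f l m < -M" if "l \<noteq> k" "m \<noteq> l" for l m
    using f that by (metis (full_types))
  have gd: "p l < g l l \<and> g l l < (p l + q l)/2" if "l \<noteq> k" for l
    using g that by (metis (full_types))
  have go: "M < g l m \<and> g l m < M+1" if "l \<noteq> k" "m \<noteq> l" for l m
    using g that by (metis (full_types))
  have Mb2: "-M < p m \<and> p m < M \<and> -M < q m \<and> q m < M" for m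
    using Mb[of m] by (simp add: abs_less_iff)
  define P where "P l = (if l = k then p else f l)" for l
  define Q where "Q l = (if l = k then q else g l)" for l
  have "std P Q"
    unfolding std_def
  proof (intro conjI allI impI)
    fix l :: 'n show "Q l l < P l l"
    proof (cases "l = k")
      case True then show ?thesis using gap by (simp add: P_def Q_def)
    next
      case False
      then show ?thesis using fd[OF False] gd[OF False] unfolding P_def Q_def by simp
    qed
  next
    fix l l' m :: 'n assume ne: "l \<noteq> l'"
    show "P l m < Q l' m"
    proof (cases "l = k")
      case True
      then have l'k: "l' \<noteq> k" using ne by auto
      show ?thesis
      proof (cases "m = l'")
        case True then show ?thesis using \<open>l = k\<close> l'k gd[OF l'k] unfolding P_def Q_def by simp
      next
        case False then show ?thesis using \<open>l = k\<close> l'k go[OF l'k False] Mb2[of m] unfolding P_def Q_def by simp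
      qed
    next
      case lk: False
      show ?thesis
      proof (cases "l' = k")
        case True
        show ?thesis
        proof (cases "m = l")
          case True then show ?thesis using \<open>l' = k\<close> lk fd[OF lk] unfolding P_def Q_def by simp
        next
          case False then show ?thesis using \<open>l' = k\<close> lk fo[OF lk False] Mb2[of m] unfolding P_def Q_def by simp
        qed
      next
        case l'k: False
        have C: "f l m < g l' m"
        proof (cases "m = l")
          case True
          then have "m \<noteq> l'" using ne by simp
          then show ?thesis using True fd[OF lk] go[OF l'k] Mb2[of m] by force
        next
          case mnl: False
          show ?thesis
          proof (cases "m = l'")
            case True
            then show ?thesis using fo[OF lk mnl] gd[OF l'k] Mb2[of m] by force
          next
            case False
            then show ?thesis using fo[OF lk mnl] go[OF l'k False] Mb2[of m] by force
          qed
        qed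
        then show ?thesis using lk l'k unfolding P_def Q_def by simp
      qed
    qed
  qed
  moreover have "\<forall>l. P l \<in> D \<and> Q l \<in> D" using f g pD qD unfolding P_def Q_def by auto
  ultimately show ?thesis by (intro exI[of _ P] exI[of _ Q]) (simp add: P_def Q_def)
qed

lemma E0:
  "\<exists>P Q. std P Q \<and> (\<forall>l. P l \<in> D \<and> Q l \<in> D) \<and> (\<forall>l. P l l < 3 \<and> 0 < Q l l)
     \<and> (\<forall>l m. m \<noteq> l \<longrightarrow> P l m < -1 \<and> 4 < Q l m)"
proof -
  have "\<forall>l. \<exists>x. x \<in> D \<and> (\<forall>m. (if m = l then 2 else -2) < x m \<and> x m < (if m = l then 3 else -1))"
  proof
    fix l :: 'n
    have "\<forall>m. (if m = l then 2 else -2) < (if m = l then 3 else (-1::rat))" by auto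
    from pick[OF this] show "\<exists>x. x \<in> D \<and> (\<forall>m. (if m = l then 2 else -2) < x m \<and> x m < (if m = l then 3 else -1))" by blast
  qed
  then obtain P where P: "\<forall>l. P l \<in> D \<and> (\<forall>m. (if m = l then 2 else -2) < P l m \<and> P l m < (if m = l then 3 else -1))"
    by metis
  have "\<forall>l. \<exists>x. x \<in> D \<and> (\<forall>m. (if m = l then 0 else 4) < x m \<and> x m < (if m = l then 1 else 5))"
  proof
    fix l :: 'n
    have "\<forall>m. (if m = l then 0 else 4) < (if m = l then 1 else (5::rat))" by auto
    from pick[OF this] show "\<exists>x. x \<in> D \<and> (\<forall>m. (if m = l then 0 else 4) < x m \<and> x m < (if m = l then 1 else 5))" by blast
  qed
  then obtain Q where Q: "\<forall>l. Q l \<in> D \<and> (\<forall>m. (if m = l then 0 else 4) < Q l m \<and> Q l m < (if m = l then 1 else 5))"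
    by metis
  have Pd: "2 < P l l \<and> P l l < 3" for l using P by (metis (full_types))
  have Po: "m \<noteq> l \<Longrightarrow> -2 < P l m \<and> P l m < -1" for l m using P by (metis (full_types))
  have Qd: "0 < Q l l \<and> Q l l < 1" for l using Q by (metis (full_types))
  have Qo: "m \<noteq> l \<Longrightarrow> 4 < Q l m \<and> Q l m < 5" for l m using Q by (metis (full_types))
  have "std P Q" unfolding std_def
  proof (intro conjI allI impI)
    fix l :: 'n show "Q l l < P l l" using Pd[of l] Qd[of l] by simp
  next
    fix l l' m :: 'n assume ne: "l \<noteq> l'"
    show "P l m < Q l' m"
    proof (cases "m = l")
      case True then show ?thesis using ne Pd[of l] Qo[of m l'] by force
    next
      case False
      show ?thesis
      proof (cases "m = l'")
        case True then show ?thesis using False Po[of m l] Qd[of l'] by force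
      next
        case mm: False then show ?thesis using False Po[of m l] Qo[of m l'] by force
      qed
    qed
  qed
  then show ?thesis using P Q Pd Po Qd Qo by blast
qed

lemma claim:
  assumes st: "std P0 Q0" and DD: "\<forall>l. P0 l \<in> D \<and> Q0 l \<in> D"
    and b1: "P0 k k < 3" "0 < Q0 k k" and b2: "\<forall>m. m \<noteq> k \<longrightarrow> P0 k m < -1 \<and> 4 < Q0 k m"
    and rs: "(Q0 k, P0 k) \<in> R s"
    and aD: "a \<in> D" and bD: "b \<in> D" and ab: "a k < b k"
  shows "(a, b) \<in> R s"
proof -
  define M where "M = 3 + (\<Sum>i\<in>UNIV. \<bar>a i\<bar> + \<bar>b i\<bar>)"
  have Mb: "-M < a m \<and> a m < M \<and> -M < b m \<and> b m < M \<and> 3 \<le> M" for m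
    using bound_sum[of a m b] unfolding M_def by (auto simp: abs_less_iff)
  define c where "c = (a k + b k) / 2"
  have c: "a k < c" "c < b k" using ab unfolding c_def by auto
  have "\<forall>m. (if m = k then c else -M-1) < (if m = k then b k else -M)" using c by auto
  from pick[OF this] obtain p where pD: "p \<in> D" and
    p: "\<forall>m. (if m = k then c else -M-1) < p m \<and> p m < (if m = k then b k else -M)" by blast
  have "\<forall>m. (if m = k then a k else M) < (if m = k then c else M+1)" using c by auto
  from pick[OF this] obtain q where qD: "q \<in> D" and
    q: "\<forall>m. (if m = k then a k else M) < q m \<and> q m < (if m = k then c else M+1)" by blast
  have "\<forall>m. (if m = k then M else 0) < (if m = k then M+1 else (1::rat))" by auto
  from pick[OF this] obtain w where wD: "w \<in> D" and
    w: "\<forall>m. (if m = k then M else 0) < w m \<and> w m < (if m = k then M+1 else 1)" by blast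
  have "\<forall>m. (if m = k then -M-1 else 2) < (if m = k then -M else (3::rat))" by auto
  from pick[OF this] obtain z where zD: "z \<in> D" and
    z: "\<forall>m. (if m = k then -M-1 else 2) < z m \<and> z m < (if m = k then -M else 3)" by blast
  have pk: "c < p k \<and> p k < b k" using p by (metis (full_types))
  have po: "m \<noteq> k \<Longrightarrow> p m < -M" for m using p by (metis (full_types))
  have qk: "a k < q k \<and> q k < c" using q by (metis (full_types))
  have qo: "m \<noteq> k \<Longrightarrow> M < q m" for m using q by (metis (full_types))
  have wk: "M < w k" using w by (metis (full_types))
  have wo: "m \<noteq> k \<Longrightarrow> 0 < w m \<and> w m < 1" for m using w by (metis (full_types))
  have zk: "z k < -M" using z by (metis (full_types))
  have zo: "m \<noteq> k \<Longrightarrow> 2 < z m \<and> z m < 3" for m using z by (metis (full_types))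
  obtain j where j: "(q, p) \<in> R j" using rev_ex[OF pD qD, of k] pk qk c by force
  have zq: "(z, q) \<in> R i" for i
  proof (rule sl_R[OF zD qD], rule allI)
    fix m show "z m < q m"
      using zk qk zo[of m] qo[of m] Mb[of m] Mb[of k] by (cases "m = k") auto
  qed
  have pw: "(p, w) \<in> R i" for i
  proof (rule sl_R[OF pD wD], rule allI)
    fix m show "p m < w m"
      using pk wk wo[of m] po[of m] Mb[of m] Mb[of k] by (cases "m = k") auto
  qed
  have zQ: "(z, Q0 k) \<in> R i" for i
  proof (rule sl_R[OF zD], use DD in blast, rule allI)
    fix m show "z m < Q0 k m"
      using zk b1 b2 zo[of m] Mb[of k] by (cases "m = k") auto
  qed
  have Pw: "(P0 k, w) \<in> R i" for i
  proof (rule sl_R[OF _ wD], use DD in blast, rule allI)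
    fix m show "P0 k m < w m"
      using wk b1 b2 wo[of m] Mb[of k] by (cases "m = k") auto
  qed
  have zw1: "(z, w) \<in> R j" using zq j pw trans_R by meson
  have zw2: "(z, w) \<in> R s" using zQ rs Pw trans_R by meson
  have "\<forall>m. m \<noteq> k \<longrightarrow> w m < z m" using wo zo by force
  moreover have "z k < w k" using zk wk Mb[of k] by auto
  ultimately obtain P Q where PQ: "std P Q" "\<forall>l. P l \<in> D \<and> Q l \<in> D" "P k = w" "Q k = z"
    using extend[OF wD zD] by blast
  have "j = s" using std_unique[OF PQ(1,2), of k j s] zw1 zw2 PQ(3,4) by simp
  have aq: "(a, q) \<in> R s"
  proof (rule sl_R[OF aD qD], rule allI)
    fix m show "a m < q m"
      using qk qo[of m] Mb[of m] by (cases "m = k") auto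
  qed
  have pb: "(p, b) \<in> R s"
  proof (rule sl_R[OF pD bD], rule allI)
    fix m show "p m < b m"
      using pk po[of m] Mb[of m] by (cases "m = k") auto
  qed
  show ?thesis using aq j pb \<open>j = s\<close> trans_R by meson
qed

end

theorem lemma6p5:
  fixes D :: "('n::finite \<Rightarrow> rat) set"
    and R :: "'n \<Rightarrow> ('n \<Rightarrow> rat) rel"
  assumes "card (UNIV :: 'n set) \<ge> 2"
    and "dense_in_Qn D"
    and "no_common_coord D"
    and "\<And>j. lin_order_on D (R j)"
    and "realizes D UNIV R prod_less"
  shows "\<exists>\<sigma>::'n \<Rightarrow> 'n. bij \<sigma> \<and>
           (\<forall>i. \<forall>a\<in>D. \<forall>b\<in>D. a i < b i \<longleftrightarrow> (a, b) \<in> R (\<sigma> i))"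
proof -
  interpret S: lem_ctx D R using assms by (unfold_locales) auto
  obtain P Q where st: "std P Q" and DD: "\<forall>l. P l \<in> D \<and> Q l \<in> D"
    and b1: "\<forall>l. P l l < 3 \<and> 0 < Q l l" and b2: "\<forall>l m. m \<noteq> l \<longrightarrow> P l m < -1 \<and> 4 < Q l m"
    using S.E0 by blast
  define \<sigma> where "\<sigma> l = (SOME j. (Q l, P l) \<in> R j)" for l
  have t: "(Q l, P l) \<in> R (\<sigma> l)" for l
    unfolding \<sigma>_def by (rule someI_ex, rule S.rev_ex[of "P l" "Q l" l]) (use st DD in \<open>auto simp: std_def\<close>)
  have "inj \<sigma>" unfolding inj_def using S.at_most_one[OF st DD] t by metis
  then have "bij \<sigma>" by (simp add: bij_def finite_UNIV_inj_surj)
  moreover have "\<forall>i. \<forall>a\<in>D. \<forall>b\<in>D. a i < b i \<longleftrightarrow> (a, b) \<in> R (\<sigma> i)"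
  proof (intro allI ballI iffI)
    fix i a b assume aD: "a \<in> D" and bD: "b \<in> D" and ab: "a i < b i"
    show "(a, b) \<in> R (\<sigma> i)"
      by (rule S.claim[OF st DD _ _ _ t aD bD ab]) (use b1 b2 in auto)
  next
    fix i a b assume aD: "a \<in> D" and bD: "b \<in> D" and r: "(a, b) \<in> R (\<sigma> i)"
    have "a \<noteq> b" using r S.irr by blast
    then have "a i \<noteq> b i" using assms(3) aD bD unfolding no_common_coord_def by blast
    show "a i < b i"
    proof (rule ccontr)
      assume "\<not> a i < b i"
      then have ba: "b i < a i" using \<open>a i \<noteq> b i\<close> by simp
      have "(b, a) \<in> R (\<sigma> i)"
        by (rule S.claim[OF st DD _ _ _ t bD aD ba]) (use b1 b2 in auto)
      then have "(a, a) \<in> R (\<sigma> i)" using r S.trans_R by blast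
      then show False using S.irr by blast
    qed
  qed
  ultimately show ?thesis by blast
qed

end
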